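(* Let $q$ be a rational number in $[0,1]$. Then there is an expression $q=\frac mn$ (with $m$ a nonnegative integer and $n$ a positive integer) where $n=2^rs$ with $s$ odd and $2^r\ge s-1$; and for any such expression, $\mathbb{Q}[C_n]$ contains a projection $e$ (i.e. $e=e^*=e^2$) with $\mathrm{tr}_{C_n}(e)=q$ and $ne\in\mathbb{Z}[C_n]$.
   Context: $C_n$ denotes a cyclic group of order $n$. For $a\in\mathbb{Q}[C_n]$, $\mathrm{tr}_{C_n}(a)$ is the coefficient of the identity element in $a$; the involution is $(\sum a_g g)^*=\sum \overline{a_g}g^{-1}$. *)

theory Defs
  imports Main "HOL.Rat"
begin

text \<open>The group ring Q[C_n]: the cyclic group C_n is modelled by {0..<n} with addition mod n
  (generator g corresponds to 1, g^k to k). An element sum_k a_k g^k is a function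
  a :: nat => rat vanishing outside {0..<n}.\<close>

definition cyc_elem :: "nat \<Rightarrow> (nat \<Rightarrow> rat) \<Rightarrow> bool" where
  "cyc_elem n a \<longleftrightarrow> (\<forall>k. n \<le> k \<longrightarrow> a k = 0)"

definition cyc_mult :: "nat \<Rightarrow> (nat \<Rightarrow> rat) \<Rightarrow> (nat \<Rightarrow> rat) \<Rightarrow> (nat \<Rightarrow> rat)" where
  "cyc_mult n a b = (\<lambda>k. if k < n then (\<Sum>i<n. a i * b ((k + n - i) mod n)) else 0)"

text \<open>Involution (sum a_g g)^* = sum conj(a_g) g^{-1}; conjugation is trivial on Q.\<close>
definition cyc_star :: "nat \<Rightarrow> (nat \<Rightarrow> rat) \<Rightarrow> (nat \<Rightarrow> rat)" where
  "cyc_star n a = (\<lambda>k. if k < n then a ((n - k) mod n) else 0)"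

definition cyc_tr :: "(nat \<Rightarrow> rat) \<Rightarrow> rat" where
  "cyc_tr a = a 0"

definition cyc_projection :: "nat \<Rightarrow> (nat \<Rightarrow> rat) \<Rightarrow> bool" where
  "cyc_projection n e \<longleftrightarrow> cyc_elem n e \<and> cyc_star n e = e \<and> cyc_mult n e e = e"

end

theory Submission
  imports Defs "HOL-Library.Function_Algebras"
begin


abbreviation M where "M \<equiv> cyc_mult"

lemma int_sb: "i \<le> n \<Longrightarrow> int ((k + n - i) mod n) = (int k - int i) mod int n"
proof -
  assume "i \<le> n"
  hence "int (k + n - i) = (int k - int i) + int n" by simp
  thus ?thesis by (simp add: zmod_int)
qed

lemma nat_eq_from_mod: "a < n \<Longrightarrow> b < n \<Longrightarrow> int a mod int n = int b mod int n \<Longrightarrow> a = b"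
  by (metis mod_less of_nat_eq_iff zmod_int)

lemma sum_perm:
  fixes n :: nat
  assumes "\<And>i. i < n \<Longrightarrow> \<sigma> i < n" "inj_on \<sigma> {..<n}"
  shows "sum \<phi> {..<n} = (\<Sum>i<n. \<phi> (\<sigma> i))"
proof -
  have "\<sigma> ` {..<n} = {..<n}"
    by (rule endo_inj_surj) (use assms in auto)
  hence "sum \<phi> {..<n} = sum \<phi> (\<sigma> ` {..<n})" by simp
  also have "\<dots> = (\<Sum>i<n. \<phi> (\<sigma> i))" using assms(2) by (simp add: sum.reindex)
  finally show ?thesis .
qed

lemma sum_shift:
  fixes n :: nat
  assumes "0 < n"
  shows "sum \<phi> {..<n} = (\<Sum>l<n. \<phi> ((l + j) mod n))"
proof (rule sum_perm)
  show "inj_on (\<lambda>l. (l + j) mod n) {..<n}"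
  proof
    fix x y :: nat assume "x \<in> {..<n}" "y \<in> {..<n}" "(x + j) mod n = (y + j) mod n"
    hence "int ((x + j) mod n) = int ((y + j) mod n)" by simp
    hence "(int x + int j) mod int n = (int y + int j) mod int n" by (simp add: zmod_int)
    hence "((int x + int j) mod int n - int j) mod int n = ((int y + int j) mod int n - int j) mod int n" by simp
    hence "int x mod int n = int y mod int n" by (simp add: mod_diff_left_eq)
    thus "x = y" using \<open>x \<in> _\<close> \<open>y \<in> _\<close> nat_eq_from_mod by auto
  qed
qed (use assms in auto)

lemma sum_refl:
  fixes n :: nat
  assumes "0 < n" "k < n"
  shows "sum \<phi> {..<n} = (\<Sum>i<n. \<phi> ((k + n - i) mod n))"
proof (rule sum_perm)
  show "inj_on (\<lambda>i. (k + n - i) mod n) {..<n}"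
  proof
    fix x y :: nat assume "x \<in> {..<n}" "y \<in> {..<n}" "(k + n - x) mod n = (k + n - y) mod n"
    hence "int ((k + n - x) mod n) = int ((k + n - y) mod n)" by simp
    moreover have "int ((k + n - x) mod n) = (int k - int x) mod int n" "int ((k + n - y) mod n) = (int k - int y) mod int n"
      using \<open>x \<in> _\<close> \<open>y \<in> _\<close> by (simp_all add: int_sb)
    ultimately have "(int k - int x) mod int n = (int k - int y) mod int n" by simp
    hence "(int k - (int k - int x) mod int n) mod int n = (int k - (int k - int y) mod int n) mod int n" by simp
    hence "int x mod int n = int y mod int n" by (simp add: mod_diff_right_eq)
    thus "x = y" using \<open>x \<in> _\<close> \<open>y \<in> _\<close> nat_eq_from_mod by auto
  qed
qed (use assms in auto)

lemma M_comm: "M n f g = M n g f"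
proof (rule ext)
  fix k
  show "M n f g k = M n g f k"
  proof (cases "k < n")
    case True
    hence n: "0 < n" by simp
    have "(\<Sum>i<n. f i * g ((k + n - i) mod n)) = (\<Sum>i<n. f ((k + n - i) mod n) * g ((k + n - ((k + n - i) mod n)) mod n))"
      by (rule sum_refl[OF n True])
    also have "\<dots> = (\<Sum>i<n. g i * f ((k + n - i) mod n))"
    proof (rule sum.cong)
      fix i assume i: "i \<in> {..<n}"
      have "int ((k + n - ((k + n - i) mod n)) mod n) = (int k - int ((k + n - i) mod n)) mod int n"
        using n by (intro int_sb) simp
      also have "\<dots> = (int k - (int k - int i) mod int n) mod int n" using i by (simp add: int_sb)
      also have "\<dots> = int i mod int n" by (simp add: mod_diff_right_eq)
      also have "\<dots> = int i" using i by simp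
      finally have "(k + n - ((k + n - i) mod n)) mod n = i" by simp
      thus "f ((k + n - i) mod n) * g ((k + n - ((k + n - i) mod n)) mod n) = g i * f ((k + n - i) mod n)"
        by simp
    qed simp
    finally show ?thesis using True by (simp add: cyc_mult_def)
  qed (simp add: cyc_mult_def)
qed

lemma M_assoc: "M n (M n f g) h = M n f (M n g h)"
proof (rule ext)
  fix k
  show "M n (M n f g) h k = M n f (M n g h) k"
  proof (cases "k < n")
    case True
    hence n: "0 < n" by simp
    have "M n (M n f g) h k = (\<Sum>i<n. (\<Sum>j<n. f j * g ((i + n - j) mod n)) * h ((k + n - i) mod n))"
      using True by (simp add: cyc_mult_def)
    also have "\<dots> = (\<Sum>i<n. \<Sum>j<n. f j * (g ((i + n - j) mod n) * h ((k + n - i) mod n)))"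
      by (simp add: sum_distrib_right mult.assoc)
    also have "\<dots> = (\<Sum>j<n. \<Sum>i<n. f j * (g ((i + n - j) mod n) * h ((k + n - i) mod n)))"
      by (rule sum.swap)
    also have "\<dots> = (\<Sum>j<n. f j * (\<Sum>i<n. g ((i + n - j) mod n) * h ((k + n - i) mod n)))"
      by (simp add: sum_distrib_left)
    also have "\<dots> = (\<Sum>j<n. f j * (\<Sum>l<n. g l * h (((k + n - j) mod n + n - l) mod n)))"
    proof (rule sum.cong[OF refl])
      fix j assume j: "j \<in> {..<n}"
      have "(\<Sum>i<n. g ((i + n - j) mod n) * h ((k + n - i) mod n))
          = (\<Sum>l<n. g ((((l + j) mod n) + n - j) mod n) * h ((k + n - (l + j) mod n) mod n))"
        by (rule sum_shift[OF n])
      also have "\<dots> = (\<Sum>l<n. g l * h (((k + n - j) mod n + n - l) mod n))"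
      proof (rule sum.cong[OF refl])
        fix l assume l: "l \<in> {..<n}"
        have m: "(l + j) mod n \<le> n" using n by (simp add: less_imp_le)
        have "int ((((l + j) mod n) + n - j) mod n) = (int ((l + j) mod n) - int j) mod int n"
          using j by (intro int_sb) simp
        also have "\<dots> = (int l + int j - int j) mod int n" by (simp add: zmod_int mod_diff_left_eq)
        also have "\<dots> = int l" using l by simp
        finally have 1: "(((l + j) mod n) + n - j) mod n = l" by simp
        have "int ((k + n - (l + j) mod n) mod n) = (int k - int ((l + j) mod n)) mod int n"
          using m by (rule int_sb)
        also have "\<dots> = (int k - (int l + int j)) mod int n" by (simp add: zmod_int mod_diff_right_eq)
        also have "\<dots> = ((int k - int j) mod int n - int l) mod int n" by (simp add: mod_diff_left_eq algebra_simps)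
        also have "\<dots> = int (((k + n - j) mod n + n - l) mod n)"
          using l j by (subst int_sb) (auto simp: int_sb)
        finally have 2: "(k + n - (l + j) mod n) mod n = ((k + n - j) mod n + n - l) mod n" by simp
        show "g ((((l + j) mod n) + n - j) mod n) * h ((k + n - (l + j) mod n) mod n) = g l * h (((k + n - j) mod n + n - l) mod n)"
          using 1 2 by simp
      qed
      finally show "f j * (\<Sum>i<n. g ((i + n - j) mod n) * h ((k + n - i) mod n)) = f j * (\<Sum>l<n. g l * h (((k + n - j) mod n + n - l) mod n))" by simp
    qed
    also have "\<dots> = M n f (M n g h) k" using True n by (simp add: cyc_mult_def)
    finally show ?thesis .
  qed (simp add: cyc_mult_def)
qed

lemma M_add_left: "M n (f + g) h = M n f h + M n g h"
  by (rule ext) (simp add: cyc_mult_def distrib_right sum.distrib)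
lemma M_diff_left: "M n (f - g) h = M n f h - M n g h"
  by (rule ext) (simp add: cyc_mult_def left_diff_distrib sum_subtractf)
lemma M_add_right: "M n h (f + g) = M n h f + M n h g"
  by (metis M_comm M_add_left)
lemma M_diff_right: "M n h (f - g) = M n h f - M n h g"
  by (metis M_comm M_diff_left)
lemma M_zero_left: "M n 0 h = 0"
  by (rule ext) (simp add: cyc_mult_def)
lemma M_zero_right: "M n h 0 = 0"
  by (metis M_comm M_zero_left)



lemma count_mod:
  fixes n l c :: nat
  assumes "0 < l" "l dvd n" "c < l"
  shows "card {i. i < n \<and> i mod l = c} = n div l"
proof -
  have "{i. i < n \<and> i mod l = c} = (\<lambda>q. q * l + c) ` {..<n div l}"
  proof (intro set_eqI iffI)
    fix i assume "i \<in> {i. i < n \<and> i mod l = c}"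
    hence i: "i < n" "i mod l = c" by auto
    have "i div l < n div l" using i assms by (metis div_less_iff_less_mult dvd_div_mult_self)
    moreover have "i = (i div l) * l + c" using i by (metis div_mult_mod_eq)
    ultimately show "i \<in> (\<lambda>q. q * l + c) ` {..<n div l}" by auto
  next
    fix i assume "i \<in> (\<lambda>q. q * l + c) ` {..<n div l}"
    then obtain q where q: "q < n div l" "i = q * l + c" by auto
    have "q * l + c < (q + 1) * l" using assms by simp
    also have "\<dots> \<le> (n div l) * l" using q by (intro mult_right_mono) auto
    also have "\<dots> = n" using assms by simp
    finally show "i \<in> {i. i < n \<and> i mod l = c}" using q assms by simp
  qed
  moreover have "inj_on (\<lambda>q. q * l + c) {..<n div l}" using assms by (intro inj_onI) simp
  ultimately show ?thesis by (simp add: card_image)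
qed

lemma count_main:
  fixes n u v k :: nat
  assumes "0 < n" "u dvd n" "v dvd n" "k < n" "gcd u v dvd k"
  shows "card {i. i < n \<and> u dvd i \<and> v dvd (k + n - i)} = n div lcm u v"
proof -
  define l where "l = lcm u v"
  have u0: "u > 0" "v > 0" using assms by (auto intro: ccontr)
  hence l0: "l > 0" unfolding l_def by (simp add: lcm_pos_nat)
  have ln: "l dvd n" unfolding l_def using assms by simp
  obtain c where c: "k = gcd u v * c" using assms by (auto elim: dvdE)
  obtain x y :: int where xy: "x * int u + y * int v = gcd (int u) (int v)" using bezout_int by blast
  define X where "X = x * int u * int c"
  have kX: "int k - X = y * int v * int c"
  proof -
    have "int k = (x * int u + y * int v) * int c" using xy c by simp
    thus ?thesis unfolding X_def by (simp add: algebra_simps)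
  qed
  define c0 where "c0 = nat (X mod int l)"
  have c0l: "c0 < l" unfolding c0_def using l0 by (simp add: nat_less_iff)
  have c0i: "int c0 = X mod int l" unfolding c0_def using l0 by simp
  have key: "(u dvd i \<and> v dvd (k + n - i)) \<longleftrightarrow> i mod l = c0" if i: "i < n" for i
  proof -
    have 1: "u dvd i \<longleftrightarrow> int u dvd (int i - X)"
      unfolding X_def by (simp add: dvd_diff_left_iff)
    have "v dvd (k + n - i) \<longleftrightarrow> int v dvd (int k + int n - int i)" using i
      by (metis (full_types) of_nat_add of_nat_dvd_iff order_less_asym' trans_le_add2 verit_comp_simplify1(3) zdiff_int_split)
    also have "\<dots> \<longleftrightarrow> int v dvd (int k - int i)"
      using assms(3) by (metis add_diff_cancel_left' diff_add_cancel diff_add_eq dvd_diff_left_iff int_dvd_int_iff)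
    also have "\<dots> \<longleftrightarrow> int v dvd (int i - X)"
    proof -
      have "int k - int i = - (int i - X) + y * int v * int c" using kX by simp
      thus ?thesis by (smt (verit, best) dvd_add_right_iff dvd_trans dvd_triv_left dvd_triv_right)
    qed
    finally have 2: "v dvd (k + n - i) \<longleftrightarrow> int v dvd (int i - X)" .
    have "(u dvd i \<and> v dvd (k + n - i)) \<longleftrightarrow> int l dvd (int i - X)"
      unfolding 1 2 l_def by (simp add: lcm_int_int_eq[symmetric] del: lcm_int_int_eq)
    also have "\<dots> \<longleftrightarrow> int i mod int l = X mod int l" by (simp add: mod_eq_dvd_iff)
    also have "\<dots> \<longleftrightarrow> i mod l = c0" using c0i by (metis of_nat_eq_iff zmod_int)
    finally show ?thesis .
  qed
  have "{i. i < n \<and> u dvd i \<and> v dvd (k + n - i)} = {i. i < n \<and> i mod l = c0}"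
    using key by auto
  thus ?thesis using count_mod[OF l0 ln c0l] l_def by simp
qed



definition Bv :: "nat \<Rightarrow> nat \<Rightarrow> nat \<Rightarrow> rat" where
  "Bv n u = (\<lambda>k. if k < n \<and> u dvd k then of_nat u / of_nat n else 0)"

lemma sum_indicator:
  "(\<Sum>i<(n::nat). if P i then (c::rat) else 0) = of_nat (card {i. i < n \<and> P i}) * c"
proof -
  have "{i. i < n \<and> P i} = {i \<in> {..<n}. P i}" by auto
  hence "of_nat (card {i. i < n \<and> P i}) * c = sum (\<lambda>_. c) {i \<in> {..<n}. P i}" by simp
  also have "\<dots> = (\<Sum>i<n. if P i then c else 0)" by (rule sum.inter_filter) simp
  finally show ?thesis by simp
qed

lemma count_zero:
  fixes n u v k :: nat
  assumes "v dvd n" "\<not> gcd u v dvd k"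
  shows "{i. i < n \<and> u dvd i \<and> v dvd (k + n - i)} = {}"
proof (rule ccontr)
  assume "{i. i < n \<and> u dvd i \<and> v dvd (k + n - i)} \<noteq> {}"
  then obtain i where i: "i < n" "u dvd i" "v dvd (k + n - i)" by auto
  have "gcd u v dvd i" "gcd u v dvd (k + n - i)" "gcd u v dvd n"
    using i assms by (auto intro: dvd_trans)
  hence "gcd u v dvd (k + n - i) + i" by simp
  moreover have "k + n - i + i = k + n" using i by simp
  ultimately have "gcd u v dvd k + n" by simp
  hence "gcd u v dvd k" using \<open>gcd u v dvd n\<close> by (simp add: dvd_add_left_iff)
  thus False using assms by simp
qed

lemma Bv_mult:
  assumes n: "0 < n" and u: "u dvd n" and v: "v dvd n"
  shows "M n (Bv n u) (Bv n v) = Bv n (gcd u v)"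
proof (rule ext)
  fix k
  show "M n (Bv n u) (Bv n v) k = Bv n (gcd u v) k"
  proof (cases "k < n")
    case False thus ?thesis by (simp add: cyc_mult_def Bv_def)
  next
    case True
    have u0: "u > 0" "v > 0" using u v n by (auto intro: ccontr)
    have "M n (Bv n u) (Bv n v) k = (\<Sum>i<n. if u dvd i \<and> v dvd (k + n - i) then (of_nat u / of_nat n) * (of_nat v / of_nat n) else 0)"
      using True n v
      by (auto simp: cyc_mult_def Bv_def dvd_mod_iff intro!: sum.cong)
    also have "\<dots> = of_nat (card {i. i < n \<and> u dvd i \<and> v dvd (k + n - i)}) * ((of_nat u / of_nat n) * (of_nat v / of_nat n))"
      by (rule sum_indicator)
    also have "\<dots> = Bv n (gcd u v) k"
    proof (cases "gcd u v dvd k")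
      case True
      have c: "card {i. i < n \<and> u dvd i \<and> v dvd (k + n - i)} = n div lcm u v"
        using count_main[OF n u v \<open>k < n\<close> True] .
      have ld: "lcm u v dvd n" using u v by simp
      then obtain t where t: "n = lcm u v * t" by (auto simp: dvd_def)
      have l0: "lcm u v > 0" using u0 by (simp add: lcm_pos_nat)
      have ndl: "n div lcm u v = t" using t l0 by simp
      have uv: "of_nat u * of_nat v = (of_nat (gcd u v) * of_nat (lcm u v) :: rat)"
        by (metis of_nat_mult prod_gcd_lcm_nat)
      have "of_nat t * ((of_nat u / of_nat n) * (of_nat v / of_nat n)) = (of_nat t * (of_nat (gcd u v) * of_nat (lcm u v))) / (of_nat n * of_nat n :: rat)"
        by (simp add: uv[symmetric])
      also have "\<dots> = of_nat (gcd u v) * of_nat n / (of_nat n * of_nat n)"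
        by (simp add: t algebra_simps)
      also have "\<dots> = of_nat (gcd u v) / of_nat n" using n by simp
      finally show ?thesis using c ndl True \<open>k < n\<close> by (simp add: Bv_def)
    next
      case False
      thus ?thesis using count_zero[OF v False] by (simp add: Bv_def)
    qed
    finally show ?thesis .
  qed
qed



inductive good :: "nat \<Rightarrow> (nat \<Rightarrow> rat) \<Rightarrow> bool" for n where
  gB: "u dvd n \<Longrightarrow> good n (Bv n u)"
| g0: "good n 0"
| gadd: "good n x \<Longrightarrow> good n y \<Longrightarrow> good n (x + y)"
| gdiff: "good n x \<Longrightarrow> good n y \<Longrightarrow> good n (x - y)"

lemma good_elem: "good n x \<Longrightarrow> cyc_elem n x"
  by (induction rule: good.induct) (auto simp: cyc_elem_def Bv_def)

lemma star_Bv: "u dvd n \<Longrightarrow> cyc_star n (Bv n u) = Bv n u"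
proof (rule ext)
  fix k assume u: "u dvd n"
  show "cyc_star n (Bv n u) k = Bv n u k"
  proof (cases "k < n")
    case True
    have "u dvd (n - k) mod n \<longleftrightarrow> u dvd (n - k)" using u by (simp add: dvd_mod_iff)
    also have "\<dots> \<longleftrightarrow> u dvd k"
    proof
      assume "u dvd n - k"
      from dvd_diff_nat[OF u this] show "u dvd k" using True by simp
    next
      assume "u dvd k"
      from dvd_diff_nat[OF u this] show "u dvd n - k" .
    qed
    finally have "u dvd (n - k) mod n \<longleftrightarrow> u dvd k" .
    moreover have "(n - k) mod n < n" using True by simp
    ultimately show ?thesis using True by (simp add: cyc_star_def Bv_def)
  qed (simp add: cyc_star_def Bv_def)
qed

lemma good_star: "good n x \<Longrightarrow> cyc_star n x = x"
proof (induction rule: good.induct)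
  case (gB u) thus ?case by (rule star_Bv)
next
  case g0 thus ?case by (rule ext) (simp add: cyc_star_def)
next
  case (gadd x y)
  have "cyc_star n (x + y) = cyc_star n x + cyc_star n y" by (rule ext) (simp add: cyc_star_def)
  thus ?case using gadd.IH by (simp only:)
next
  case (gdiff x y)
  have "cyc_star n (x - y) = cyc_star n x - cyc_star n y" by (rule ext) (simp add: cyc_star_def)
  thus ?case using gdiff.IH by (simp only:)
qed

lemma good_int: "good n x \<Longrightarrow> of_nat n * x k \<in> \<int>"
proof (induction rule: good.induct)
  case (gB u) thus ?case by (cases "n = 0") (auto simp: Bv_def)
next
  case g0 thus ?case by simp
next
  case (gadd x y) thus ?case by (simp add: distrib_left)
next
  case (gdiff x y) thus ?case by (simp add: right_diff_distrib)
qed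

lemma good_mult:
  assumes n: "0 < n" and gx: "good n x" and gy: "good n y"
  shows "good n (M n x y)"
  using gx
proof (induction rule: good.induct)
  case (gB u)
  show ?case using gy
  proof (induction rule: good.induct)
    case (gB v)
    have "gcd u v dvd n" using gB by (meson dvd_trans gcd_dvd2)
    thus ?case using Bv_mult[OF n \<open>u dvd n\<close> gB] by (simp add: good.gB)
  next
    case g0 show ?case unfolding M_zero_right by (rule good.g0)
  next
    case (gadd x y) show ?case unfolding M_add_right by (rule good.gadd[OF gadd.IH])
  next
    case (gdiff x y) show ?case unfolding M_diff_right by (rule good.gdiff[OF gdiff.IH])
  qed
next
  case g0 show ?case unfolding M_zero_left by (rule good.g0)
next
  case (gadd x y) show ?case unfolding M_add_left by (rule good.gadd[OF gadd.IH])
next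
  case (gdiff x y) show ?case unfolding M_diff_left by (rule good.gdiff[OF gdiff.IH])
qed

lemma tr_Bv: "0 < n \<Longrightarrow> cyc_tr (Bv n u) = of_nat u / of_nat n"
  by (simp add: cyc_tr_def Bv_def)

lemma tr_add: "cyc_tr (f + g) = cyc_tr f + cyc_tr g" by (simp add: cyc_tr_def)
lemma tr_diff: "cyc_tr (f - g) = cyc_tr f - cyc_tr g" by (simp add: cyc_tr_def)
lemma tr_zero: "cyc_tr 0 = 0" by (simp add: cyc_tr_def)

lemma gcd_pow:
  assumes "odd s" "j \<le> r"
  shows "gcd (2 ^ j * s) (2 ^ r) = (2::nat) ^ j"
proof -
  have "(2::nat) ^ r = 2 ^ j * 2 ^ (r - j)" using assms by (simp add: power_add[symmetric])
  hence "gcd (2 ^ j * s) (2 ^ r) = 2 ^ j * gcd s (2 ^ (r - j))" by (simp add: gcd_mult_distrib_nat)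
  moreover have "coprime s (2 ^ (r - j))" using assms by simp
  ultimately show ?thesis by simp
qed



lemma two_part:
  assumes ns: "n = 2 ^ r * s" and s: "odd s"
  shows "t \<le> r \<Longrightarrow> a \<le> 2 ^ t \<Longrightarrow> \<exists>p. good n p \<and> M n p p = p \<and> M n p (Bv n (2 ^ t * s)) = p
      \<and> cyc_tr p = of_nat a / 2 ^ r \<and> cyc_tr (M n p (Bv n (2 ^ r))) = of_nat a / of_nat n"
proof (induction t arbitrary: a)
  have s0: "s > 0" using s by (auto intro: ccontr)
  have n0: "0 < n" using ns s0 by simp
  have dvdj: "2 ^ j * s dvd n" if "j \<le> r" for j
    using that ns by (simp add: le_imp_power_dvd)
  have dvdr: "2 ^ r dvd n" using ns by simp
  have MF: "M n (Bv n (2 ^ j * s)) (Bv n (2 ^ r)) = Bv n (2 ^ j)" if "j \<le> r" for j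
    using Bv_mult[OF n0 dvdj[OF that] dvdr] gcd_pow[OF s that] by simp
  have trB: "cyc_tr (Bv n u) = of_nat u / of_nat n" for u using tr_Bv[OF n0] .
  have nr: "(of_nat n :: rat) = 2 ^ r * of_nat s" using ns by simp
  {
    case 0
    show ?case
    proof (cases "a = 0")
      case True
      have h: "of_nat a / 2 ^ r = (0::rat)" "of_nat a / of_nat n = (0::rat)" using True by simp_all
      have f: "cyc_tr (M n 0 (Bv n (2 ^ r))) = 0" unfolding M_zero_left by (rule tr_zero)
      show ?thesis
      proof (rule exI[of _ "0::nat\<Rightarrow>rat"])
        show "good n 0 \<and> M n 0 0 = 0 \<and> M n 0 (Bv n (2 ^ 0 * s)) = 0 \<and> cyc_tr 0 = of_nat a / 2 ^ r
          \<and> cyc_tr (M n 0 (Bv n (2 ^ r))) = of_nat a / of_nat n"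
          unfolding h by (intro conjI good.g0 M_zero_left tr_zero f)
      qed
    next
      case False
      hence a1: "a = 1" using 0 by simp
      have sd: "s dvd n" using ns by simp
      have "M n (Bv n s) (Bv n s) = Bv n s" using Bv_mult[OF n0 sd sd] by simp
      moreover have "M n (Bv n s) (Bv n (2 ^ r)) = Bv n 1" using MF[of 0] by simp
      moreover have "cyc_tr (Bv n s) = 1 / 2 ^ r" using trB[of s] nr s0 by simp
      ultimately show ?thesis using a1 sd trB[of 1]
        by (intro exI[of _ "Bv n s"]) (simp add: good.gB)
    qed
  next
    case (Suc t)
    define X where "X = Bv n (2 ^ Suc t * s)"
    define Y where "Y = Bv n (2 ^ t * s)"
    have tr: "t \<le> r" "Suc t \<le> r" using Suc by auto
    have gXY: "gcd (2 ^ t * s) (2 ^ Suc t * s) = 2 ^ t * s"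
      by (rule gcd_nat.absorb1) simp
    have YX: "M n Y X = Y" unfolding X_def Y_def using Bv_mult[OF n0 dvdj[OF tr(1)] dvdj[OF tr(2)]] gXY by simp
    have XY: "M n X Y = Y" using YX M_comm by metis
    have XX: "M n X X = X" unfolding X_def using Bv_mult[OF n0 dvdj[OF tr(2)] dvdj[OF tr(2)]] by simp
    have YY: "M n Y Y = Y" unfolding Y_def using Bv_mult[OF n0 dvdj[OF tr(1)] dvdj[OF tr(1)]] by simp
    have absorb: "M n p X = p" if "M n p Y = p" for p
      by (metis M_assoc YX that)
    show ?case
    proof (cases "a \<le> 2 ^ t")
      case True
      from Suc.IH[OF tr(1) True] obtain p where p: "good n p" "M n p p = p" "M n p Y = p"
        "cyc_tr p = of_nat a / 2 ^ r" "cyc_tr (M n p (Bv n (2 ^ r))) = of_nat a / of_nat n"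
        unfolding Y_def by blast
      show ?thesis using p absorb[OF p(3)] unfolding X_def by blast
    next
      case False
      define a' where "a' = a - 2 ^ t"
      have a': "a' \<le> 2 ^ t" "a = a' + 2 ^ t" using False Suc.prems unfolding a'_def by auto
      from Suc.IH[OF tr(1) a'(1)] obtain p where p: "good n p" "M n p p = p" "M n p Y = p"
        "cyc_tr p = of_nat a' / 2 ^ r" "cyc_tr (M n p (Bv n (2 ^ r))) = of_nat a' / of_nat n"
        unfolding Y_def by blast
      have pX: "M n p X = p" using absorb[OF p(3)] .
      have Xp: "M n X p = p" using pX M_comm by metis
      have Yp: "M n Y p = p" using p(3) M_comm by metis
      define e where "e = (X - Y) + p"
      have DD: "M n (X - Y) (X - Y) = X - Y"
        unfolding M_diff_left M_diff_right XX XY YX YY by simp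
      have Dp: "M n (X - Y) p = 0" unfolding M_diff_left Xp Yp by simp
      have pD: "M n p (X - Y) = 0" unfolding M_diff_right pX p(3) by simp
      have ee: "M n e e = e" unfolding e_def M_add_left M_add_right DD Dp pD p(2) by simp
      have eX: "M n e X = e" unfolding e_def M_add_left M_diff_left XX YX pX ..
      have ge: "good n e" unfolding e_def X_def Y_def
        by (intro good.gadd good.gdiff good.gB dvdj tr p(1))
      have tre: "cyc_tr e = of_nat a / 2 ^ r"
        unfolding e_def tr_add tr_diff X_def Y_def trB p(4) nr a'(2) using s0
        by (simp add: field_simps)
      have MXF: "M n X (Bv n (2 ^ r)) = Bv n (2 ^ Suc t)" unfolding X_def by (rule MF[OF tr(2)])
      have MYF: "M n Y (Bv n (2 ^ r)) = Bv n (2 ^ t)" unfolding Y_def by (rule MF[OF tr(1)])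
      have treF: "cyc_tr (M n e (Bv n (2 ^ r))) = of_nat a / of_nat n"
        unfolding e_def M_add_left M_diff_left MXF MYF tr_add tr_diff trB p(5) a'(2) using n0
        by (simp add: field_simps)
      show ?thesis using ge ee eX tre treF unfolding X_def by blast
    qed
  }
qed



lemma split_m:
  fixes P d m :: nat
  assumes "d \<le> P" "m \<le> P + P * d"
  shows "\<exists>a a'. a \<le> P \<and> a' \<le> P \<and> m = a + a' * d"
proof (cases "d = 0")
  case True thus ?thesis using assms by (intro exI[of _ m] exI[of _ 0]) simp
next
  case False
  show ?thesis
  proof (cases "m div d \<le> P")
    case True
    have "m mod d < d" using False by simp
    thus ?thesis using True assms(1) by (intro exI[of _ "m mod d"] exI[of _ "m div d"]) simp
  next
    case c: False
    have "(P + 1) * d \<le> (m div d) * d" using c by (intro mult_right_mono) auto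
    also have "\<dots> \<le> m" by simp
    finally have "P * d \<le> m" by simp
    thus ?thesis using assms by (intro exI[of _ "m - P * d"] exI[of _ P]) auto
  qed
qed

lemma odd_decomp: "(n::nat) > 0 \<Longrightarrow> \<exists>r s. n = 2 ^ r * s \<and> odd s"
proof (induction n rule: less_induct)
  case (less n)
  show ?case
  proof (cases "odd n")
    case True thus ?thesis by (intro exI[of _ 0] exI[of _ n]) simp
  next
    case False
    then obtain k where k: "n = 2 * k" by (auto elim: evenE)
    hence "k < n" "k > 0" using less.prems by auto
    from less.IH[OF this] obtain r s where "k = 2 ^ r * s" "odd s" by blast
    thus ?thesis using k by (intro exI[of _ "Suc r"] exI[of _ s]) simp
  qed
qed

lemma part1:
  fixes q :: rat
  assumes "0 \<le> q"
  shows "\<exists>(m::nat) (n::nat) (r::nat) (s::nat). 0 < n \<and> q = of_nat m / of_nat n \<and>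
            n = 2 ^ r * s \<and> odd s \<and> 2 ^ r \<ge> s - 1"
proof -
  obtain a b where ab: "quotient_of q = (a, b)" by (cases "quotient_of q") auto
  have b0: "b > 0" using quotient_of_denom_pos[OF ab] .
  have qab: "q = of_int a / of_int b" using quotient_of_div[OF ab] .
  have a0: "a \<ge> 0"
  proof (rule ccontr)
    assume "\<not> a \<ge> 0"
    hence "(of_int a :: rat) / of_int b < 0" using b0 by (simp add: divide_neg_pos)
    thus False using assms qab by simp
  qed
  define m0 where "m0 = nat a"
  define n0 where "n0 = nat b"
  have n00: "n0 > 0" using b0 unfolding n0_def by simp
  have q0: "q = of_nat m0 / of_nat n0" using qab a0 b0 unfolding m0_def n0_def by simp
  obtain r s where rs: "n0 = 2 ^ r * s" "odd s" using odd_decomp[OF n00] by blast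
  have "s < 2 ^ s" by (rule less_exp)
  also have "(2::nat) ^ s \<le> 2 ^ (r + s)" by (intro power_increasing) auto
  finally have le: "s - 1 \<le> 2 ^ (r + s)" by simp
  have "q = of_nat (m0 * 2 ^ s) / of_nat (n0 * 2 ^ s)" using q0 by simp
  moreover have "n0 * 2 ^ s = 2 ^ (r + s) * s" using rs by (simp add: power_add)
  ultimately show ?thesis using n00 rs le
    by (intro exI[of _ "m0 * 2 ^ s"] exI[of _ "n0 * 2 ^ s"] exI[of _ "r + s"] exI[of _ s]) simp
qed



lemma idem_calc:
  assumes pp: "M n p p = p" and qq: "M n p' p' = p'" and FF: "M n F F = F"
  shows "M n (p' + M n (p - p') F) (p' + M n (p - p') F) = p' + M n (p - p') F"
proof -
  define x where "x = p - p'"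
  define A where "A = M n p' p"
  have A': "M n p p' = A" unfolding A_def by (rule M_comm)
  have 1: "M n p' (M n x F) = M n (M n p' x) F" by (rule M_assoc[symmetric])
  have 2: "M n (M n x F) p' = M n (M n p' x) F" by (metis M_comm 1)
  have "M n F (M n x F) = M n x F" by (metis M_assoc M_comm FF)
  hence 3: "M n (M n x F) (M n x F) = M n (M n x x) F" by (metis M_assoc)
  have px: "M n p' x = A - p'" unfolding x_def M_diff_right qq A_def ..
  have xx: "M n x x = p - A - A + p'" unfolding x_def M_diff_right M_diff_left pp qq A' A_def
    by (simp add: algebra_simps)
  have "M n (p' + M n x F) (p' + M n x F) = p' + (M n (A - p') F + M n (A - p') F + M n (p - A - A + p') F)"
    unfolding M_add_left M_add_right 1 2 3 px xx qq by (simp add: algebra_simps)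
  also have "\<dots> = p' + M n ((A - p') + (A - p') + (p - A - A + p')) F"
    unfolding M_add_left ..
  also have "(A - p') + (A - p') + (p - A - A + p') = x" unfolding x_def by (simp add: algebra_simps)
  finally show ?thesis unfolding x_def .
qed

lemma part2:
  fixes q :: rat
  assumes q1: "q \<le> 1" and n0: "0 < n" and qm: "q = of_nat m / of_nat n" and ns: "n = 2 ^ r * s"
    and s: "odd s" and rs: "2 ^ r \<ge> s - 1"
  shows "\<exists>e. cyc_projection n e \<and> cyc_tr e = q \<and> (\<forall>k. of_nat n * e k \<in> \<int>)"
proof -
  have s0: "s \<ge> 1" using s by (cases s) auto
  have "of_nat m / of_nat n \<le> (1::rat)" using q1 qm by simp
  hence "m \<le> n" using n0 by (simp add: divide_le_eq_1)
  hence "m \<le> 2 ^ r + 2 ^ r * (s - 1)" using ns s0 by (simp add: algebra_simps)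
  from split_m[OF rs this] obtain a a' where aa: "a \<le> 2 ^ r" "a' \<le> 2 ^ r" "m = a + a' * (s - 1)"
    by blast
  obtain p where p: "good n p" "M n p p = p"
      "cyc_tr p = of_nat a / 2 ^ r" "cyc_tr (M n p (Bv n (2 ^ r))) = of_nat a / of_nat n"
    using two_part[OF ns s order.refl aa(1)] by blast
  obtain p' where p': "good n p'" "M n p' p' = p'"
      "cyc_tr p' = of_nat a' / 2 ^ r" "cyc_tr (M n p' (Bv n (2 ^ r))) = of_nat a' / of_nat n"
    using two_part[OF ns s order.refl aa(2)] by blast
  define F where "F = Bv n (2 ^ r)"
  have dr: "2 ^ r dvd n" using ns by simp
  have FF: "M n F F = F" unfolding F_def using Bv_mult[OF n0 dr dr] by simp
  define e where "e = p' + M n (p - p') F"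
  have ge: "good n e" unfolding e_def F_def
    by (intro good.gadd p' good_mult n0 good.gdiff p good.gB dr)
  have ee: "M n e e = e" unfolding e_def by (rule idem_calc[OF p(2) p'(2) FF])
  have "cyc_tr e = of_nat a' / 2 ^ r + of_nat a / of_nat n - of_nat a' / of_nat n"
    unfolding e_def M_diff_left tr_add tr_diff F_def p(4) p'(3,4) by simp
  also have "\<dots> = q" unfolding qm aa(3) ns using s0
    by (simp add: field_simps of_nat_diff)
  finally have tre: "cyc_tr e = q" .
  show ?thesis
    using ge ee tre good_elem[OF ge] good_star[OF ge] good_int[OF ge]
    unfolding cyc_projection_def by blast
qed


theorem lemma5p1:
  fixes q :: rat
  assumes "0 \<le> q" and "q \<le> 1"
  shows "(\<exists>(m::nat) (n::nat) (r::nat) (s::nat). 0 < n \<and> q = of_nat m / of_nat n \<and>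
            n = 2 ^ r * s \<and> odd s \<and> 2 ^ r \<ge> s - 1)
       \<and> (\<forall>(m::nat) (n::nat) (r::nat) (s::nat). 0 < n \<and> q = of_nat m / of_nat n \<and>
            n = 2 ^ r * s \<and> odd s \<and> 2 ^ r \<ge> s - 1 \<longrightarrow>
            (\<exists>e. cyc_projection n e \<and> cyc_tr e = q \<and>
                 (\<forall>k. of_nat n * e k \<in> \<int>)))"
  using part1[OF assms(1)] part2[OF assms(2)] by blast

end
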